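(* There is an absolute constant $C>0$ such that for every integer $N\ge2$, every Hilbert space $\mathcal{H}$ of dimension $N$ with orthonormal basis $e_0,\dots,e_{N-1}$, every $K\in\mathcal{D}(\mathbb{T})$ and every $e\in\mathcal{H}$, \[ \sum_{I\in\mathcal{D}(K)}|\langle\omega_I,e\rangle_{\mathcal{H}}|^2\,|I|\le C|K|\,\|e\|_{\mathcal{H}}^2 , \] where the vectors $\omega_I$ are defined as follows.
   Context: $\mathbb{T}$ is identified with $[0,1)$ via $x\mapsto e^{2\pi ix}$; $\mathcal{D}(\mathbb{T})$ is the set of dyadic intervals $[2^{-j}k,2^{-j}(k+1))\subset[0,1)$, $j\ge0$, and $\mathcal{D}(K)$ the dyadic subintervals of $K$. For such $I$, $|I|$ is its length, $C_I$ its center, and $\mathrm{rk}(I)=-\log_2|I|$. Let $a_m=\frac{1}{m(\log N)^{1/2}}$ for $1\le m\le N$. For $I\in\mathcal{D}(\mathbb{T})$ with $\mathrm{rk}(I)=j\in[1,N]$, set $\omega_I=\sum_{l=0}^{j-1}a_{j-l}\,e^{2\pi i2^lC_I}e_l$; for other ranks $\omega_I=0$. *)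

theory Defs
  imports "HOL-Analysis.Analysis"
begin

text \<open>A dyadic interval [2^-j k, 2^-j (k+1)) in [0,1) is encoded by the pair (j,k) with k < 2^j.\<close>

definition dyadic :: "nat \<times> nat \<Rightarrow> bool" where
  "dyadic I \<longleftrightarrow> snd I < 2 ^ fst I"

definition dlen :: "nat \<times> nat \<Rightarrow> real" where
  "dlen I = (1/2) ^ fst I"

definition dcenter :: "nat \<times> nat \<Rightarrow> real" where
  "dcenter I = (real (snd I) + 1/2) / 2 ^ fst I"

definition dyadic_sub :: "nat \<times> nat \<Rightarrow> (nat \<times> nat) set" where
  "dyadic_sub K = {I. dyadic I \<and> fst K \<le> fst I \<and> snd I div 2 ^ (fst I - fst K) = snd K}"

definition acoef :: "nat \<Rightarrow> nat \<Rightarrow> real" where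
  "acoef N m = 1 / (real m * sqrt (ln (real N)))"

text \<open>Coordinates of omega_I w.r.t. the orthonormal basis e_0,...,e_{N-1}.\<close>
definition omega :: "nat \<Rightarrow> nat \<times> nat \<Rightarrow> nat \<Rightarrow> complex" where
  "omega N I l = (if 1 \<le> fst I \<and> fst I \<le> N \<and> l < fst I
     then complex_of_real (acoef N (fst I - l)) *
          exp (2 * complex_of_real pi * \<i> * complex_of_real (2 ^ l * dcenter I))
     else 0)"

definition hinner :: "nat \<Rightarrow> (nat \<Rightarrow> complex) \<Rightarrow> (nat \<Rightarrow> complex) \<Rightarrow> complex" where
  "hinner N x y = (\<Sum>l<N. x l * cnj (y l))"

definition hnorm2 :: "nat \<Rightarrow> (nat \<Rightarrow> complex) \<Rightarrow> real" where
  "hnorm2 N x = (\<Sum>l<N. (cmod (x l))^2)"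

end

theory Submission
  imports Defs
begin
lemma sq_tele: "(d::real) \<ge> 1 \<Longrightarrow> (1/d)^2 \<le> 2/d - 2/(d+1)"
proof -
  assume d: "d \<ge> 1"
  have e1: "2/d - 2/(d+1) = 2/(d*(d+1))" using d by (simp add: field_simps)
  have p: "d*(d+1) \<le> 2*(d*d)" using d by auto
  have "(1/d)^2 = 2/(2*(d*d))" by (simp add: power2_eq_square)
  also have "\<dots> \<le> 2/(d*(d+1))" using p d by (intro divide_left_mono) auto
  finally show ?thesis using e1 by simp
qed

lemma harm_bound: "n \<ge> 1 \<Longrightarrow> (\<Sum>d<n. 1 / (real d + 1)) \<le> 1 + ln (real n)"
proof (induction n rule: nat_induct_at_least)
  case base then show ?case by simp
next
  case (Suc n)
  have "ln (real n / (real n + 1)) \<le> real n / (real n + 1) - 1"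
    using Suc by (auto intro: ln_le_minus_one)
  hence "1 / (real n + 1) \<le> ln (real n + 1) - ln (real n)"
    using Suc by (simp add: ln_div field_simps)
  moreover have "real (Suc n) = real n + 1" by simp
  ultimately show ?case using Suc by (simp only: sum.lessThan_Suc)
qed

lemma tele_A: "k \<le> j \<Longrightarrow> (\<Sum>l<k. (1 / real (j - l))^2) \<le> 2 / (real (j - k) + 1)"
proof (induction k)
  case 0 then show ?case by simp
next
  case (Suc k)
  define d where "d = real (j - Suc k) + 1"
  have d1: "d \<ge> 1" by (simp add: d_def)
  have jk: "real (j - k) = d" using Suc.prems by (simp add: d_def of_nat_diff)
  have "(\<Sum>l<Suc k. (1 / real (j - l))^2) \<le> 2 / (d + 1) + (1/d)^2"
    using Suc jk by simp
  also have "\<dots> \<le> 2 / d"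
    using sq_tele[OF d1] by simp
  finally show ?case by (simp add: d_def)
qed

lemma tele_B: "(\<Sum>j\<le>N. (if l < j then (1 / real (j - l))^2 else 0)) \<le> 2 - 2 / (real (N - l) + 1)"
proof (induction N)
  case 0 then show ?case by simp
next
  case (Suc N)
  show ?case
  proof (cases "l < Suc N")
    case True
    define d where "d = real (Suc N - l)"
    have d1: "d \<ge> 1" using True by (simp add: d_def)
    have e: "real (N - l) + 1 = d" using True by (simp add: d_def of_nat_diff)
    have "(\<Sum>j\<le>Suc N. (if l < j then (1 / real (j - l))^2 else 0))
       = (\<Sum>j\<le>N. (if l < j then (1 / real (j - l))^2 else 0)) + (1/d)^2"
      using True by (simp add: d_def)
    also have "\<dots> \<le> 2 - 2 / d + (1/d)^2" using Suc.IH e by simp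
    also have "\<dots> \<le> 2 - 2 / (d + 1)"
      using sq_tele[OF d1] by simp
    finally show ?thesis by (simp add: d_def)
  next
    case False
    then show ?thesis using Suc by simp
  qed
qed

lemma acoef_sq: "N \<ge> 2 \<Longrightarrow> (acoef N m)^2 = (1 / real m)^2 / ln (real N)"
  by (simp add: acoef_def power_divide power_mult_distrib)

lemma root_sum:
  fixes d :: int and M :: nat
  assumes "d \<noteq> 0" "\<bar>d\<bar> < int M"
  shows "(\<Sum>r<M. exp (2 * complex_of_real pi * \<i> * of_int d / of_nat M) ^ r) = 0"
proof -
  define w where "w = exp (2 * complex_of_real pi * \<i> * of_int d / of_nat M)"
  have M0: "M > 0" using assms by auto
  have wM: "w ^ M = 1"
  proof -
    have a: "of_nat M * (2 * complex_of_real pi * \<i> * of_int d / of_nat M) = 2 * complex_of_real pi * \<i> * of_int d"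
      using M0 by (simp add: field_simps)
    have "w ^ M = exp (of_nat M * (2 * complex_of_real pi * \<i> * of_int d / of_nat M))"
      unfolding w_def by (rule exp_of_nat_mult[symmetric])
    also have "\<dots> = exp (2 * complex_of_real pi * \<i> * of_int d)" by (simp only: a)
    also have "\<dots> = 1" by (subst exp_eq_1) (auto intro!: exI[of _ d])
    finally show ?thesis .
  qed
  have w1: "w \<noteq> 1"
  proof
    assume "w = 1"
    then obtain n :: int where n: "2 * pi * of_int d / of_nat M = of_int (2 * n) * pi"
      unfolding w_def exp_eq_1 by auto
    hence "real_of_int d = of_int n * of_nat M" using M0 by (simp add: field_simps)
    hence "d = n * int M" by (metis of_int_eq_iff of_int_mult of_int_of_nat_eq)
    hence ad: "\<bar>d\<bar> = \<bar>n\<bar> * int M" by (simp add: abs_mult)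
    have "n \<noteq> 0" using \<open>d = n * int M\<close> assms(1) by auto
    hence "\<bar>n\<bar> \<ge> 1" by linarith
    hence "\<bar>n\<bar> * int M \<ge> 1 * int M" by (intro mult_right_mono) auto
    with ad assms(2) show False by simp
  qed
  show ?thesis using geometric_sum[OF w1, of M] wM by (simp add: w_def[symmetric])
qed

lemma orth_sum:
  fixes c \<theta> :: "nat \<Rightarrow> complex"
  assumes fin: "finite L" and nrm: "\<And>l. l \<in> L \<Longrightarrow> cmod (\<theta> l) = 1"
    and orth: "\<And>l l'. l \<in> L \<Longrightarrow> l' \<in> L \<Longrightarrow> l \<noteq> l' \<Longrightarrow> (\<Sum>r<M. (\<theta> l * cnj (\<theta> l'))^r) = 0"
  shows "(\<Sum>r<M. (cmod (\<Sum>l\<in>L. c l * \<theta> l ^ r))^2) = real M * (\<Sum>l\<in>L. (cmod (c l))^2)"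
proof -
  have tc: "\<theta> l * cnj (\<theta> l) = 1" if "l \<in> L" for l
    using complex_norm_square[of "\<theta> l"] nrm[OF that] by simp
  have "complex_of_real (\<Sum>r<M. (cmod (\<Sum>l\<in>L. c l * \<theta> l ^ r))^2)
      = (\<Sum>r<M. (\<Sum>l\<in>L. c l * \<theta> l ^ r) * cnj (\<Sum>l\<in>L. c l * \<theta> l ^ r))"
    by (simp only: of_real_sum complex_norm_square)
  also have "\<dots> = (\<Sum>r<M. \<Sum>l\<in>L. \<Sum>l'\<in>L. c l * cnj (c l') * (\<theta> l * cnj (\<theta> l'))^r)"
    by (simp add: sum_product cnj_sum power_mult_distrib mult_ac)
  also have "\<dots> = (\<Sum>l\<in>L. \<Sum>l'\<in>L. c l * cnj (c l') * (\<Sum>r<M. (\<theta> l * cnj (\<theta> l'))^r))"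
    by (simp add: sum_distrib_left sum.swap[of _ "{..<M}"])
  also have "\<dots> = (\<Sum>l\<in>L. c l * cnj (c l) * of_nat M)"
  proof (rule sum.cong[OF refl])
    fix l assume l: "l \<in> L"
    have "(\<Sum>l'\<in>L. c l * cnj (c l') * (\<Sum>r<M. (\<theta> l * cnj (\<theta> l'))^r))
        = c l * cnj (c l) * (\<Sum>r<M. (\<theta> l * cnj (\<theta> l))^r)
          + (\<Sum>l'\<in>L - {l}. c l * cnj (c l') * (\<Sum>r<M. (\<theta> l * cnj (\<theta> l'))^r))"
      using l fin by (simp add: sum.remove)
    also have "(\<Sum>l'\<in>L - {l}. c l * cnj (c l') * (\<Sum>r<M. (\<theta> l * cnj (\<theta> l'))^r)) = 0"
      using orth l by (intro sum.neutral) auto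
    finally show "(\<Sum>l'\<in>L. c l * cnj (c l') * (\<Sum>r<M. (\<theta> l * cnj (\<theta> l'))^r)) = c l * cnj (c l) * of_nat M"
      using tc[OF l] by simp
  qed
  also have "\<dots> = of_nat M * (\<Sum>l\<in>L. c l * cnj (c l))"
    by (simp add: sum_distrib_left mult_ac)
  also have "\<dots> = complex_of_real (real M * (\<Sum>l\<in>L. (cmod (c l))^2))"
    by (simp only: of_real_mult of_real_sum complex_norm_square of_real_of_nat_eq)
  finally show ?thesis using of_real_eq_iff by blast
qed

lemma hinner_omega:
  assumes "1 \<le> j" "j \<le> N"
  shows "hinner N (omega N (j,n)) e = (\<Sum>l<j. complex_of_real (acoef N (j - l)) *
          exp (2 * complex_of_real pi * \<i> * complex_of_real (2 ^ l * dcenter (j,n))) * cnj (e l))"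
proof -
  have "hinner N (omega N (j,n)) e = (\<Sum>l<N. (if l < j then complex_of_real (acoef N (j - l)) *
          exp (2 * complex_of_real pi * \<i> * complex_of_real (2 ^ l * dcenter (j,n))) * cnj (e l) else 0))"
    unfolding hinner_def omega_def
  proof (rule sum.cong[OF refl])
    fix l show "(if 1 \<le> fst (j, n) \<and> fst (j, n) \<le> N \<and> l < fst (j, n)
           then complex_of_real (acoef N (fst (j, n) - l)) *
                exp (2 * complex_of_real pi * \<i> * complex_of_real (2 ^ l * dcenter (j, n)))
           else 0) * cnj (e l) = (if l < j then complex_of_real (acoef N (j - l)) *
          exp (2 * complex_of_real pi * \<i> * complex_of_real (2 ^ l * dcenter (j,n))) * cnj (e l) else 0)"
      using assms by (cases "l < j") (simp_all only: fst_conv, simp_all)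
  qed
  also have "\<dots> = (\<Sum>l<j. complex_of_real (acoef N (j - l)) *
          exp (2 * complex_of_real pi * \<i> * complex_of_real (2 ^ l * dcenter (j,n))) * cnj (e l))"
    using assms by (intro sum.mono_neutral_cong_right) auto
  finally show ?thesis .
qed

lemma omega_zero: "\<not> (1 \<le> fst I \<and> fst I \<le> N) \<Longrightarrow> hinner N (omega N I) e = 0"
  unfolding hinner_def omega_def by (auto intro!: sum.neutral)


lemma cmod_exp_i: "cmod (exp (2 * complex_of_real pi * \<i> * complex_of_real x)) = 1"
  by simp

lemma sq_sum_le: "((a::real) + b)^2 \<le> 2 * a^2 + 2 * b^2"
proof -
  have "0 \<le> (a - b)^2" by simp
  thus ?thesis by (simp add: power2_eq_square algebra_simps)
qed

lemma theta_prod: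
  "exp (2 * complex_of_real pi * \<i> * complex_of_real x) * cnj (exp (2 * complex_of_real pi * \<i> * complex_of_real y))
   = exp (2 * complex_of_real pi * \<i> * complex_of_real (x - y))"
proof -
  have "cnj (exp (2 * complex_of_real pi * \<i> * complex_of_real y)) = exp (- (2 * complex_of_real pi * \<i> * complex_of_real y))"
    by (simp add: exp_cnj)
  thus ?thesis by (simp add: exp_add[symmetric] algebra_simps)
qed

lemma orth_dyadic:
  assumes "k \<le> l" "l < j" "k \<le> l'" "l' < j" "l \<noteq> l'"
  shows "(\<Sum>r<2^(j-k). (exp (2 * complex_of_real pi * \<i> * complex_of_real (2^(l-k)/2^(j-k)))
           * cnj (exp (2 * complex_of_real pi * \<i> * complex_of_real (2^(l'-k)/2^(j-k)))))^r) = 0"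
proof -
  define M :: nat where "M = 2^(j-k)"
  define d :: int where "d = 2^(l-k) - 2^(l'-k)"
  have a: "(2::nat)^(l-k) < M" "(2::nat)^(l'-k) < M" using assms by (auto simp: M_def)
  have "(2::nat)^(l-k) \<noteq> 2^(l'-k)" using assms by (simp add: power_inject_exp)
  hence d0: "d \<noteq> 0" unfolding d_def by (metis of_nat_eq_iff of_nat_numeral of_nat_power right_minus_eq)
  have "0 < (2::int)^(l-k)" "0 < (2::int)^(l'-k)" by auto
  moreover have "(2::int)^(l-k) < int M" "(2::int)^(l'-k) < int M" using a by (metis of_nat_less_iff of_nat_numeral of_nat_power)+
  ultimately have dM: "\<bar>d\<bar> < int M" unfolding d_def by linarith
  have h: "complex_of_real (2^(l-k)/2^(j-k) - 2^(l'-k)/2^(j-k)) = of_int d / of_nat M"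
    by (simp add: d_def M_def diff_divide_distrib)
  have "exp (2 * complex_of_real pi * \<i> * complex_of_real (2^(l-k)/2^(j-k)))
           * cnj (exp (2 * complex_of_real pi * \<i> * complex_of_real (2^(l'-k)/2^(j-k))))
        = exp (2 * complex_of_real pi * \<i> * of_int d / of_nat M)"
    by (simp only: theta_prod h times_divide_eq_right)
  thus ?thesis using root_sum[OF d0 dM] by (simp add: M_def)
qed


lemma phase_split:
  assumes "k \<le> l" "k \<le> j"
  shows "exp (2 * complex_of_real pi * \<i> * complex_of_real (2 ^ l * dcenter (j, q * 2^(j-k) + r)))
     = exp (2 * complex_of_real pi * \<i> * complex_of_real (2 ^ l * dcenter (j, q * 2^(j-k))))
       * exp (2 * complex_of_real pi * \<i> * complex_of_real (2^(l-k)/2^(j-k))) ^ r"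
proof -
  have p1: "(2::real)^l = 2^(l-k) * 2^k" using assms by (simp flip: power_add)
  have p2: "(2::real)^j = 2^(j-k) * 2^k" using assms by (simp flip: power_add)
  have rid: "2 ^ l * dcenter (j, q * 2^(j-k) + r) = 2 ^ l * dcenter (j, q * 2^(j-k)) + real r * (2^(l-k)/2^(j-k))"
    unfolding dcenter_def by (simp add: p1 p2 field_simps)
  show ?thesis
    unfolding rid by (simp only: exp_of_nat_mult[symmetric] exp_add[symmetric] of_real_add of_real_mult of_real_of_nat_eq distrib_left mult_ac add_ac)
qed


lemma perj:
  assumes kj: "k \<le> j" and jN: "j \<le> N" and N2: "N \<ge> 2"
  shows "(\<Sum>r<2^(j-k). (cmod (hinner N (omega N (j, q*2^(j-k)+r)) e))^2 * dlen (j, q*2^(j-k)+r))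
     \<le> 2 * (1/2)^k * ((\<Sum>l<k. (acoef N (j-l))^2) * (\<Sum>l<k. (cmod (e l))^2)
          + (\<Sum>l\<in>{k..<j}. (acoef N (j-l))^2 * (cmod (e l))^2))"
proof (cases "j = 0")
  case True
  with kj show ?thesis by (simp add: omega_zero)
next
  case False
  hence j1: "1 \<le> j" by simp
  define M where "M = (2::nat)^(j-k)"
  define ph where "ph l r = exp (2 * complex_of_real pi * \<i> * complex_of_real (2 ^ l * dcenter (j, q * 2^(j-k) + r)))" for l r
  define a where "a l = acoef N (j - l)" for l
  define X where "X r = (\<Sum>l<k. complex_of_real (a l) * ph l r * cnj (e l))" for r
  define Y where "Y r = (\<Sum>l\<in>{k..<j}. complex_of_real (a l) * ph l r * cnj (e l))" for r
  define A where "A = (\<Sum>l<k. (a l)^2)"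
  define E where "E = (\<Sum>l<k. (cmod (e l))^2)"
  define B where "B = (\<Sum>l\<in>{k..<j}. (a l)^2 * (cmod (e l))^2)"
  have apos: "a l \<ge> 0" for l using N2 by (simp add: a_def acoef_def)
  have phn: "cmod (ph l r) = 1" for l r by (simp add: ph_def)
  have hsplit: "hinner N (omega N (j, q*2^(j-k)+r)) e = X r + Y r" for r
  proof -
    have u: "{..<j} = {..<k} \<union> {k..<j}" using kj by auto
    show ?thesis unfolding hinner_omega[OF j1 jN] X_def Y_def ph_def a_def u
      by (rule sum.union_disjoint) auto
  qed
  have Xb: "(cmod (X r))^2 \<le> A * E" for r
  proof -
    have "cmod (X r) \<le> (\<Sum>l<k. cmod (complex_of_real (a l) * ph l r * cnj (e l)))"
      unfolding X_def by (rule norm_sum)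
    also have "\<dots> = (\<Sum>l<k. a l * cmod (e l))"
      using apos by (simp add: norm_mult phn)
    finally have "(cmod (X r))^2 \<le> (\<Sum>l<k. a l * cmod (e l))^2"
      by (intro power_mono) auto
    also have "\<dots> \<le> A * E" unfolding A_def E_def by (rule Cauchy_Schwarz_ineq_sum)
    finally show ?thesis .
  qed
  define c where "c l = complex_of_real (a l) * ph l 0 * cnj (e l)" for l
  define \<theta> where "\<theta> l = exp (2 * complex_of_real pi * \<i> * complex_of_real (2^(l-k)/2^(j-k)))" for l
  have Yeq: "Y r = (\<Sum>l\<in>{k..<j}. c l * \<theta> l ^ r)" for r
    unfolding Y_def c_def \<theta>_def
  proof (rule sum.cong[OF refl])
    fix l assume "l \<in> {k..<j}"
    hence "k \<le> l" by auto
    thus "complex_of_real (a l) * ph l r * cnj (e l) =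
      complex_of_real (a l) * ph l 0 * cnj (e l) * exp (2 * complex_of_real pi * \<i> * complex_of_real (2 ^ (l - k) / 2 ^ (j - k))) ^ r"
      unfolding ph_def using phase_split[OF _ kj, of l q r] by (simp add: mult_ac)
  qed
  have Ysum: "(\<Sum>r<M. (cmod (Y r))^2) = real M * B"
  proof -
    have "(\<Sum>r<M. (cmod (Y r))^2) = real M * (\<Sum>l\<in>{k..<j}. (cmod (c l))^2)"
      unfolding Yeq
    proof (rule orth_sum)
      show "finite {k..<j}" by simp
      show "cmod (\<theta> l) = 1" for l by (simp add: \<theta>_def)
      show "(\<Sum>r<M. (\<theta> l * cnj (\<theta> l'))^r) = 0" if "l \<in> {k..<j}" "l' \<in> {k..<j}" "l \<noteq> l'" for l l'
        using that unfolding M_def \<theta>_def by (intro orth_dyadic) auto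
    qed
    also have "(\<Sum>l\<in>{k..<j}. (cmod (c l))^2) = B"
      unfolding B_def c_def using apos by (simp add: norm_mult phn power_mult_distrib)
    finally show ?thesis .
  qed
  have Mj: "real M * (1/2)^j = (1/2)^k"
  proof -
    have "(1/2::real)^k = 2^(j-k) * (1/2)^(j-k) * (1/2)^k" by (simp add: power_one_over)
    also have "\<dots> = 2^(j-k) * (1/2)^j" using kj by (simp add: power_add[symmetric])
    finally show ?thesis by (simp add: M_def)
  qed
  have "(\<Sum>r<2^(j-k). (cmod (hinner N (omega N (j, q*2^(j-k)+r)) e))^2 * dlen (j, q*2^(j-k)+r))
      = (\<Sum>r<M. (cmod (X r + Y r))^2 * (1/2)^j)"
    by (simp add: hsplit dlen_def M_def)
  also have "\<dots> \<le> (\<Sum>r<M. (2 * (A * E) + 2 * (cmod (Y r))^2) * (1/2)^j)"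
  proof (rule sum_mono)
    fix r
    have "(cmod (X r + Y r))^2 \<le> (cmod (X r) + cmod (Y r))^2"
      by (intro power_mono norm_triangle_ineq) auto
    also have "\<dots> \<le> 2 * (cmod (X r))^2 + 2 * (cmod (Y r))^2" by (rule sq_sum_le)
    also have "\<dots> \<le> 2 * (A * E) + 2 * (cmod (Y r))^2" using Xb[of r] by simp
    finally show "(cmod (X r + Y r))^2 * (1/2)^j \<le> (2 * (A * E) + 2 * (cmod (Y r))^2) * (1/2)^j"
      by (intro mult_right_mono) auto
  qed
  also have "\<dots> = (\<Sum>r<M. 2 * (A * E) + 2 * (cmod (Y r))^2) * (1/2)^j"
    by (simp add: sum_distrib_right)
  also have "\<dots> = (2 * real M * (A * E) + 2 * (\<Sum>r<M. (cmod (Y r))^2)) * (1/2)^j"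
    by (simp add: sum.distrib sum_distrib_left)
  also have "\<dots> = (2 * real M * (A * E) + 2 * (real M * B)) * (1/2)^j"
    by (simp only: Ysum)
  also have "\<dots> = 2 * (real M * (1/2)^j) * (A * E + B)" by (simp add: algebra_simps)
  also have "\<dots> = 2 * (1/2)^k * (A * E + B)" by (simp only: Mj)
  finally show ?thesis by (simp add: A_def E_def B_def a_def)
qed


lemma sumA_bound:
  assumes N2: "N \<ge> 2"
  shows "(\<Sum>j\<in>{k..N}. (\<Sum>l<k. (acoef N (j-l))^2)) \<le> 2 * (2 + ln (real N)) / ln (real N)"
proof (cases "k \<le> N")
  case False
  hence "{k..N} = {}" by auto
  moreover have "0 < ln (real N)" using N2 by simp
  ultimately show ?thesis by simp
next
  case True
  define L where "L = ln (real N)"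
  have L0: "L > 0" using N2 by (simp add: L_def)
  have "(\<Sum>j\<in>{k..N}. (\<Sum>l<k. (acoef N (j-l))^2)) = (\<Sum>j\<in>{k..N}. (\<Sum>l<k. (1 / real (j-l))^2) / L)"
    using N2 by (simp add: acoef_sq sum_divide_distrib L_def)
  also have "\<dots> \<le> (\<Sum>j\<in>{k..N}. (2 / (real (j - k) + 1)) / L)"
    using L0 by (intro sum_mono divide_right_mono tele_A) auto
  also have "\<dots> = (\<Sum>d<N-k+1. (2 / (real d + 1)) / L)"
    by (rule sum.reindex_bij_witness[of _ "\<lambda>d. d+k" "\<lambda>j. j-k"]) (use True in auto)
  also have "\<dots> = 2 * (\<Sum>d<N-k+1. 1 / (real d + 1)) / L"
  proof -
    have "(\<Sum>d<N-k+1. (2 / (real d + 1)) / L) = (\<Sum>d<N-k+1. 2 / (real d + 1)) / L"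
      by (rule sum_divide_distrib[symmetric])
    moreover have "(\<Sum>d<N-k+1. 2 / (real d + 1)) = 2 * (\<Sum>d<N-k+1. 1 / (real d + 1))"
      by (simp add: sum_distrib_left)
    ultimately show ?thesis by simp
  qed
  also have "\<dots> \<le> 2 * (1 + ln (real (N-k+1))) / L"
    using L0 harm_bound[of "N-k+1"] by (intro divide_right_mono mult_left_mono) auto
  also have "\<dots> \<le> 2 * (2 + L) / L"
  proof -
    have "ln (real (N-k+1)) \<le> ln (2 * real N)" using True N2 by (subst ln_le_cancel_iff) auto
    also have "\<dots> = ln 2 + L" using N2 by (simp add: L_def ln_mult)
    also have "\<dots> \<le> 1 + L" using ln_2_less_1 by simp
    finally have "ln (real (N-k+1)) \<le> 1 + L" .
    thus ?thesis using L0 by (intro divide_right_mono mult_left_mono) auto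
  qed
  finally show ?thesis by (simp add: L_def)
qed

lemma sumB_bound:
  assumes N2: "N \<ge> 2"
  shows "(\<Sum>j\<in>{k..N}. (\<Sum>l\<in>{k..<j}. (acoef N (j-l))^2 * (cmod (e l))^2)) \<le> 2 * hnorm2 N e / ln (real N)"
proof -
  define L where "L = ln (real N)"
  have L0: "L > 0" using N2 by (simp add: L_def)
  define w where "w l = (cmod (e l))^2 / L" for l
  have w0: "w l \<ge> 0" for l using L0 by (simp add: w_def)
  define g where "g j l = (if l < j then (1 / real (j - l))^2 else 0) * w l" for j l
  have g0: "g j l \<ge> 0" for j l using w0 by (simp add: g_def)
  have "(\<Sum>j\<in>{k..N}. (\<Sum>l\<in>{k..<j}. (acoef N (j-l))^2 * (cmod (e l))^2)) = (\<Sum>j\<in>{k..N}. (\<Sum>l\<in>{k..<j}. g j l))"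
    using N2 by (intro sum.cong refl) (simp add: g_def w_def acoef_sq L_def)
  also have "\<dots> \<le> (\<Sum>j\<in>{k..N}. (\<Sum>l<N. g j l))"
    using g0 by (intro sum_mono sum_mono2) auto
  also have "\<dots> \<le> (\<Sum>j\<le>N. (\<Sum>l<N. g j l))"
    using g0 by (intro sum_mono2 sum_nonneg) auto
  also have "\<dots> = (\<Sum>l<N. (\<Sum>j\<le>N. g j l))" by (rule sum.swap)
  also have "\<dots> = (\<Sum>l<N. (\<Sum>j\<le>N. (if l < j then (1 / real (j - l))^2 else 0)) * w l)"
    by (simp add: g_def sum_distrib_right)
  also have "\<dots> \<le> (\<Sum>l<N. 2 * w l)"
  proof (rule sum_mono)
    fix l
    have "(\<Sum>j\<le>N. (if l < j then (1 / real (j - l))^2 else 0)) \<le> 2"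
    proof -
      have "0 \<le> 2 / (real (N - l) + 1)" by simp
      thus ?thesis using tele_B[where N=N and l=l] by linarith
    qed
    thus "(\<Sum>j\<le>N. (if l < j then (1 / real (j - l))^2 else 0)) * w l \<le> 2 * w l"
      using w0 by (intro mult_right_mono) auto
  qed
  also have "\<dots> = 2 * hnorm2 N e / L"
    by (simp add: w_def hnorm2_def sum_distrib_left sum_divide_distrib)
  finally show ?thesis by (simp add: L_def)
qed


theorem lemma7:
  shows "\<exists>C>0. \<forall>N::nat. N \<ge> 2 \<longrightarrow> (\<forall>K. dyadic K \<longrightarrow> (\<forall>e :: nat \<Rightarrow> complex.
     (\<Sum>\<^sub>\<infinity>I\<in>dyadic_sub K. (cmod (hinner N (omega N I) e))^2 * dlen I)
       \<le> C * dlen K * hnorm2 N e))"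
proof (intro exI[of _ 24] conjI allI impI)
  show "(24::real) > 0" by simp
  fix N :: nat and K :: "nat \<times> nat" and e :: "nat \<Rightarrow> complex"
  assume N2: "N \<ge> 2" and dK: "dyadic K"
  define k where "k = fst K"
  define q where "q = snd K"
  define F where "F I = (cmod (hinner N (omega N I) e))^2 * dlen I" for I
  define L where "L = ln (real N)"
  define h where "h = hnorm2 N e"
  have L23: "L \<ge> 2/3"
  proof -
    have "ln (2::real) \<le> ln (real N)" using N2 by (subst ln_le_cancel_iff) auto
    thus ?thesis using ln2_ge_two_thirds by (simp add: L_def)
  qed
  have h0: "h \<ge> 0" by (simp add: h_def hnorm2_def sum_nonneg)
  have F0: "F I \<ge> 0" for I by (simp add: F_def dlen_def)
  define G where "G = (\<lambda>(j::nat, r::nat). (j, q * 2^(j-k) + r))"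
  define D where "D = Sigma {k..N} (\<lambda>j. {..<(2::nat)^(j-k)})"
  define T where "T = dyadic_sub K \<inter> {I. fst I \<le> N}"
  have finD: "finite D" by (simp add: D_def)
  have TG: "T \<subseteq> G ` D"
  proof
    fix I assume "I \<in> T"
    then obtain j n where I: "I = (j, n)" and jN: "j \<le> N" and kj: "k \<le> j" and nq: "n div 2^(j-k) = q"
      by (cases I) (auto simp: T_def dyadic_sub_def k_def q_def)
    have "n = q * 2^(j-k) + n mod 2^(j-k)" using nq by (metis div_mult_mod_eq)
    hence "I = G (j, n mod 2^(j-k))" by (simp add: I G_def)
    moreover have "(j, n mod 2^(j-k)) \<in> D" using jN kj by (simp add: D_def)
    ultimately show "I \<in> G ` D" by blast
  qed
  have finT: "finite T" using TG finD by (meson finite_imageI finite_subset)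
  have "(\<Sum>\<^sub>\<infinity>I\<in>dyadic_sub K. (cmod (hinner N (omega N I) e))^2 * dlen I) = infsum F T"
    unfolding F_def[abs_def]
    by (rule infsum_cong_neutral) (auto simp: T_def omega_zero)
  also have "\<dots> = sum F T" using finT by simp
  also have "\<dots> \<le> sum F (G ` D)" using TG finD F0 by (intro sum_mono2) auto
  also have "\<dots> \<le> sum (F \<circ> G) D" using finD F0 by (intro sum_image_le) auto
  also have "\<dots> = (\<Sum>j\<in>{k..N}. \<Sum>r<2^(j-k). F (j, q * 2^(j-k) + r))"
    unfolding D_def by (subst sum.Sigma) (auto simp: G_def comp_def split_def)
  also have "\<dots> \<le> (\<Sum>j\<in>{k..N}. 2 * (1/2)^k * ((\<Sum>l<k. (acoef N (j-l))^2) * h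
          + (\<Sum>l\<in>{k..<j}. (acoef N (j-l))^2 * (cmod (e l))^2)))"
  proof (rule sum_mono)
    fix j assume j: "j \<in> {k..N}"
    have E: "(\<Sum>l<k. (cmod (e l))^2) \<le> h"
      unfolding h_def hnorm2_def using j by (intro sum_mono2) auto
    have "(\<Sum>r<2^(j-k). F (j, q * 2^(j-k) + r)) \<le> 2 * (1/2)^k * ((\<Sum>l<k. (acoef N (j-l))^2) * (\<Sum>l<k. (cmod (e l))^2)
          + (\<Sum>l\<in>{k..<j}. (acoef N (j-l))^2 * (cmod (e l))^2))"
      unfolding F_def using perj[of k j N q e] j N2 by auto
    also have "\<dots> \<le> 2 * (1/2)^k * ((\<Sum>l<k. (acoef N (j-l))^2) * h
          + (\<Sum>l\<in>{k..<j}. (acoef N (j-l))^2 * (cmod (e l))^2))"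
      using E by (intro mult_left_mono add_right_mono mult_left_mono sum_nonneg) auto
    finally show "(\<Sum>r<2^(j-k). F (j, q * 2^(j-k) + r)) \<le> 2 * (1/2)^k * ((\<Sum>l<k. (acoef N (j-l))^2) * h
          + (\<Sum>l\<in>{k..<j}. (acoef N (j-l))^2 * (cmod (e l))^2))" .
  qed
  also have "\<dots> = 2 * (1/2)^k * ((\<Sum>j\<in>{k..N}. (\<Sum>l<k. (acoef N (j-l))^2)) * h
          + (\<Sum>j\<in>{k..N}. (\<Sum>l\<in>{k..<j}. (acoef N (j-l))^2 * (cmod (e l))^2)))"
    by (simp only: sum.distrib flip: sum_distrib_left sum_distrib_right)
  also have "\<dots> \<le> 2 * (1/2)^k * ((2 * (2 + L) / L) * h + 2 * h / L)"
    using sumA_bound[OF N2, where k=k] sumB_bound[OF N2, where k=k and e=e] h0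
    by (intro mult_left_mono add_mono mult_right_mono) (auto simp: L_def h_def)
  also have "\<dots> \<le> 24 * dlen K * hnorm2 N e"
  proof -
    have "(2 * (2 + L) / L) * h + 2 * h / L = (6 / L + 2) * h" using L23 by (simp add: field_simps)
    also have "\<dots> \<le> 12 * h"
    proof -
      have "6 / L \<le> 9" using L23 by (simp add: divide_le_eq)
      thus ?thesis using h0 by (intro mult_right_mono) auto
    qed
    finally have "(2 * (2 + L) / L) * h + 2 * h / L \<le> 12 * h" .
    hence "2 * (1/2)^k * ((2 * (2 + L) / L) * h + 2 * h / L) \<le> 2 * (1/2)^k * (12 * h)"
      by (intro mult_left_mono) auto
    thus ?thesis by (simp add: dlen_def k_def h_def)
  qed
  finally show "(\<Sum>\<^sub>\<infinity>I\<in>dyadic_sub K. (cmod (hinner N (omega N I) e))^2 * dlen I) \<le> 24 * dlen K * hnorm2 N e" .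
qed

end
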